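(* Let $K \colon \mathbb{Z}^2 \to \mathbb{R}$ be a finitely supported convolution kernel, $f(\bm{X}) = \bm{X} \ast K$ the corresponding convolution on bounded fields $\bm{X} \colon \mathbb{Z}^2 \to \mathbb{R}$, and let $\sigma \colon \mathbb{R} \to \mathbb{R}$ be piecewise differentiable, applied pointwise to fields. Suppose the composition $\varphi = \sigma \circ f$ is equivariant with respect to arbitrary uniform motion, i.e. $\varphi(\bm{X} + \bm{C}) = \varphi(\bm{X}) + \bm{C}$ for every field $\bm{X}$ and every constant field $\bm{C}$. Then $\varphi$ is affine of the form $\varphi(\bm{X}) = \bm{X} \ast K' + b$ for some real number $b$ and some finitely supported kernel $K'$ with $\sum_v K'(v) = 1$.
   Context: Convolution: $(\bm{X}\ast K)(p) = \sum_{q \in \mathbb{Z}^2} \bm{X}(p+q)K(q)$. A constant field $\bm{C}$ takes the same real value at every point of $\mathbb{Z}^2$; adding $b$ to a field means adding the constant field with value $b$. *)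

theory Defs
  imports "HOL-Analysis.Analysis"
begin

type_synonym field2 = "int \<times> int \<Rightarrow> real"

definition fin_supp :: "field2 \<Rightarrow> bool" where
  "fin_supp K \<longleftrightarrow> finite {q. K q \<noteq> 0}"

definition bounded_field :: "field2 \<Rightarrow> bool" where
  "bounded_field X \<longleftrightarrow> (\<exists>M. \<forall>p. \<bar>X p\<bar> \<le> M)"

text \<open>Convolution (X * K)(p) = sum over q in Z^2 of X(p+q) K(q); for a finitely supported
  kernel K this is the finite sum over the support of K.\<close>
definition conv :: "field2 \<Rightarrow> field2 \<Rightarrow> field2" where
  "conv X K p = (\<Sum>q\<in>{q. K q \<noteq> 0}. X (fst p + fst q, snd p + snd q) * K q)"

end

theory Submission
  imports Defs
begin

theorem mainTheorem6:
  fixes K :: field2 and \<sigma> :: "real \<Rightarrow> real"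
  assumes "fin_supp K"
    and "\<sigma> piecewise_differentiable_on UNIV"
    and equiv: "\<forall>X c. bounded_field X \<longrightarrow>
       (\<lambda>p. \<sigma> (conv (\<lambda>x. X x + c) K p)) = (\<lambda>p. \<sigma> (conv X K p) + c)"
  shows "\<exists>b K'. fin_supp K' \<and> (\<Sum>v\<in>{v. K' v \<noteq> 0}. K' v) = 1 \<and>
     (\<forall>X. bounded_field X \<longrightarrow> (\<lambda>p. \<sigma> (conv X K p)) = (\<lambda>p. conv X K' p + b))"
proof -
  define S where "S = {q. K q \<noteq> 0}"
  define s where "s = (\<Sum>q\<in>S. K q)"
  have b0: "bounded_field (\<lambda>_. 0)" unfolding bounded_field_def by auto
  have c0: "conv (\<lambda>x. 0 + c) K p = c * s" for c p
    unfolding conv_def s_def S_def by (simp add: sum_distrib_left)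
  have c00: "conv (\<lambda>_. 0) K p = 0" for p unfolding conv_def by simp
  have key: "\<sigma> (c * s) = \<sigma> 0 + c" for c
  proof -
    have "(\<lambda>p. \<sigma> (conv (\<lambda>x. 0 + c) K p)) = (\<lambda>p. \<sigma> (conv (\<lambda>_. 0) K p) + c)"
      using equiv b0 by auto
    hence "\<sigma> (conv (\<lambda>x. 0 + c) K (0,0)) = \<sigma> (conv (\<lambda>_. 0) K (0,0)) + c" by (rule fun_cong)
    thus ?thesis using c0 c00 by simp
  qed
  have sn: "s \<noteq> 0"
  proof
    assume "s = 0" thus False using key[of 1] by simp
  qed
  have sig: "\<sigma> t = t / s + \<sigma> 0" for t
    using key[of "t / s"] sn by (simp add: add.commute)
  define K' where "K' = (\<lambda>q. K q / s)"
  have supp: "{v. K' v \<noteq> 0} = S" unfolding K'_def S_def using sn by auto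
  show ?thesis
  proof (intro exI[of _ "\<sigma> 0"] exI[of _ K'] conjI allI impI)
    show "fin_supp K'" using assms(1) supp unfolding fin_supp_def S_def by simp
    show "(\<Sum>v\<in>{v. K' v \<noteq> 0}. K' v) = 1"
    proof -
      have "(\<Sum>v\<in>S. K v / s) = s / s" unfolding s_def by (rule sum_divide_distrib[symmetric])
      also have "\<dots> = 1" using sn by simp
      finally have "(\<Sum>v\<in>S. K' v) = 1" unfolding K'_def .
      thus ?thesis unfolding supp .
    qed
    fix X :: field2
    show "(\<lambda>p. \<sigma> (conv X K p)) = (\<lambda>p. conv X K' p + \<sigma> 0)"
    proof
      fix p
      have "conv X K' p = conv X K p / s"
        unfolding conv_def supp unfolding K'_def S_def[symmetric]
        by (simp only: sum_divide_distrib times_divide_eq_right)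
      thus "\<sigma> (conv X K p) = conv X K' p + \<sigma> 0" using sig[of "conv X K p"] by simp
    qed
  qed
qed

end
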